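(* Let $\mathrm r=(r_1,\dots,r_d)\in\mathbb{Z}_+^d$ with $\mathrm r>0$, let $x\in\bar S_d^{\mathrm r}$ with smallest solution $\mathrm k=(k_1,\dots,k_d)\in\mathbb{N}^d$ of $(\mathrm r,x)$, and assume that $(\mathrm r,x)$ is a simple system. Then the number of good cyclical permutations of $x$ (i.e. the number of $\mathrm q\in\mathbb{Z}_+^d$, $\mathrm q\le\mathrm k-1_d$, such that $\mathrm k$ is the smallest solution of $(\mathrm r,x_{\mathrm q,\mathrm k})$) is $$\sum_{(j_1,\dots,j_d)\in D}\ \prod_{i=1}^d k_{j_i i},$$ where $k_{ij}=x^{i,j}(k_i)$ for $i,j\in[d]$ and $k_{0i}=r_i$.
   Context: $d\ge2$, $[d]=\{1,\dots,d\}$, $\mathbb N=\{1,2,\dots\}$, $1_d=(1,\dots,1)$. $S_d$: families $x=(x^{(1)},\dots,x^{(d)})$, $x^{(i)}=(x^{i,1},\dots,x^{i,d})$ a $\mathbb{Z}^d$-valued sequence indexed by $\{0,\dots,n_i\}$, $x^{(i)}_0=0$, $x^{i,j}$ nondecreasing for $i\ne j$, $x^{i,i}_{n+1}-x^{i,i}_n\ge-1$; $(n_1,\dots,n_d)$ is its length; $x^{i,j}(n)=x^{i,j}_n$. A solution of $(\mathrm r,x)$ is $\mathrm s\in\mathbb{Z}_+^d$, $\mathrm s\le$ length, with $r_j+\sum_ix^{i,j}(s_i)=0$ for all $j$; the smallest solution is one that is coordinatewise $\le$ all solutions. $\bar S_d^{\mathrm r}$ is the set of $x\in S_d$ whose length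 lies in $\mathbb{N}^d$ and is the smallest solution of $(\mathrm r,x)$, and with $x^{i,i}_k=-k$ for all $k,i$. For $x\in\bar S_d^{\mathrm r}$ with smallest solution $\mathrm k$, $(\mathrm r,x)$ is a simple system if for every $i\in[d]$ there is $k'_i\le k_i-1$ such that $x^{i,j}(k)=0$ for all $0\le k\le k'_i$ and $j\ne i$, and $x^{i,j}(k)=x^{i,j}(k_i)$ for all $k'_i+1\le k\le k_i$ and $j\ne i$ (i.e. for each $i$ the sequences $x^{i,j}$, $j\ne i$, have at most one positive jump, occurring at a common time). Cyclical permutations: for $g$ on $\{0,\dots,m\}$ with $g(0)=0$, $1\le n\le m$, $0\le q\le n-1$: $g_{q,n}(h)=g(q+h)-g(q)$ for $0\le h\le n-q$, $g_{q,n}(h)=g(h-(n-q))+g(n)-g(q)$ for $n-q\le h\le n$, $g_{q,n}(h)=g(h)$ for $h\ge n$; $x_{\mathrm q,\mathrm k}=(x^{(1)}_{q_1,k_1},\dots,x^{(d)}_{q_d,k_d})$. $D$ is the set of vectors $(j_1,\dots,j_d)\in\{0,1,\dots,d\}^d$ coding an elementary forest, i.e. a forest with exactly one vertex of each type $i\in[d]$, where $j_i$ is the type of the parent of the vertex of type $i$ and $j_i=0$ if that vertex is a root; equivalently $j_i\ne i$ and for every $i$ the iterates $i,j_i,j_{j_i},\dots$ eventually reach $0$. *)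

theory Defs
  imports Main "HOL-Library.FuncSet"
begin

text \<open>Conventions: d is the dimension, types are indexed by 1..d.
  A family x is given as x i j m = x^{i,j}_m (for i,j in 1..d, 0 <= m <= n i),
  its length is n :: nat => nat (values on 1..d). Vectors in Z_+^d are
  functions nat => nat (only values on 1..d matter).\<close>

definition in_S :: "nat \<Rightarrow> (nat \<Rightarrow> nat \<Rightarrow> nat \<Rightarrow> int) \<Rightarrow> (nat \<Rightarrow> nat) \<Rightarrow> bool" where
  "in_S d x n \<longleftrightarrow>
     (\<forall>i\<in>{1..d}. \<forall>j\<in>{1..d}. x i j 0 = 0) \<and>
     (\<forall>i\<in>{1..d}. \<forall>j\<in>{1..d}. i \<noteq> j \<longrightarrow>
        (\<forall>m. m < n i \<longrightarrow> x i j m \<le> x i j (Suc m))) \<and>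
     (\<forall>i\<in>{1..d}. \<forall>m. m < n i \<longrightarrow> x i i (Suc m) - x i i m \<ge> -1)"

definition is_solution ::
  "nat \<Rightarrow> (nat \<Rightarrow> int) \<Rightarrow> (nat \<Rightarrow> nat \<Rightarrow> nat \<Rightarrow> int) \<Rightarrow> (nat \<Rightarrow> nat) \<Rightarrow> (nat \<Rightarrow> nat) \<Rightarrow> bool" where
  "is_solution d r x n s \<longleftrightarrow>
     (\<forall>i\<in>{1..d}. s i \<le> n i) \<and>
     (\<forall>j\<in>{1..d}. r j + (\<Sum>i\<in>{1..d}. x i j (s i)) = 0)"

definition smallest_solution ::
  "nat \<Rightarrow> (nat \<Rightarrow> int) \<Rightarrow> (nat \<Rightarrow> nat \<Rightarrow> nat \<Rightarrow> int) \<Rightarrow> (nat \<Rightarrow> nat) \<Rightarrow> (nat \<Rightarrow> nat) \<Rightarrow> bool" where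
  "smallest_solution d r x n s \<longleftrightarrow>
     is_solution d r x n s \<and>
     (\<forall>s'. is_solution d r x n s' \<longrightarrow> (\<forall>i\<in>{1..d}. s i \<le> s' i))"

definition in_S_bar ::
  "nat \<Rightarrow> (nat \<Rightarrow> int) \<Rightarrow> (nat \<Rightarrow> nat \<Rightarrow> nat \<Rightarrow> int) \<Rightarrow> (nat \<Rightarrow> nat) \<Rightarrow> bool" where
  "in_S_bar d r x n \<longleftrightarrow>
     in_S d x n \<and> (\<forall>i\<in>{1..d}. n i \<ge> 1) \<and> smallest_solution d r x n n \<and>
     (\<forall>i\<in>{1..d}. \<forall>m \<le> n i. x i i m = - int m)"

definition simple_system ::
  "nat \<Rightarrow> (nat \<Rightarrow> nat \<Rightarrow> nat \<Rightarrow> int) \<Rightarrow> (nat \<Rightarrow> nat) \<Rightarrow> bool" where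
  "simple_system d x k \<longleftrightarrow>
     (\<forall>i\<in>{1..d}. \<exists>k'. k' \<le> k i - 1 \<and>
        (\<forall>m \<le> k'. \<forall>j\<in>{1..d}. j \<noteq> i \<longrightarrow> x i j m = 0) \<and>
        (\<forall>m. k' + 1 \<le> m \<and> m \<le> k i \<longrightarrow> (\<forall>j\<in>{1..d}. j \<noteq> i \<longrightarrow> x i j m = x i j (k i))))"

definition cyc :: "(nat \<Rightarrow> int) \<Rightarrow> nat \<Rightarrow> nat \<Rightarrow> nat \<Rightarrow> int" where
  "cyc g q n h =
     (if h \<le> n - q then g (q + h) - g q
      else if h \<le> n then g (h - (n - q)) + g n - g q
      else g h)"

definition cyc_fam ::
  "(nat \<Rightarrow> nat \<Rightarrow> nat \<Rightarrow> int) \<Rightarrow> (nat \<Rightarrow> nat) \<Rightarrow> (nat \<Rightarrow> nat) \<Rightarrow> (nat \<Rightarrow> nat \<Rightarrow> nat \<Rightarrow> int)" where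
  "cyc_fam x q k = (\<lambda>i j h. cyc (x i j) (q i) (k i) h)"

text \<open>Codings of elementary forests: j i is the parent type of i (0 = root).\<close>
definition elem_forests :: "nat \<Rightarrow> (nat \<Rightarrow> nat) set" where
  "elem_forests d = {jv \<in> {1..d} \<rightarrow>\<^sub>E {0..d}.
     \<forall>i\<in>{1..d}. jv i \<noteq> i \<and>
       (\<exists>t. ((\<lambda>m. if m = 0 then 0 else jv m) ^^ t) i = 0)}"

end

theory Submission
  imports Defs
begin


definition vl :: "(nat\<Rightarrow>nat\<Rightarrow>nat) \<Rightarrow> (nat\<Rightarrow>nat) \<Rightarrow> nat set \<Rightarrow> nat \<Rightarrow> nat" where
  "vl W R A j = R j + (\<Sum>i\<in>A-{j}. W i j)"
definition cons :: "(nat\<Rightarrow>nat\<Rightarrow>nat) \<Rightarrow> (nat\<Rightarrow>nat) \<Rightarrow> nat set \<Rightarrow> (nat\<Rightarrow>nat) \<Rightarrow> nat set \<Rightarrow> bool" where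
  "cons W R S t A \<longleftrightarrow> (\<forall>j\<in>S. j \<in> A \<longleftrightarrow> t j \<le> vl W R A j)"
definition good :: "(nat\<Rightarrow>nat\<Rightarrow>nat) \<Rightarrow> (nat\<Rightarrow>nat) \<Rightarrow> nat set \<Rightarrow> (nat\<Rightarrow>nat) \<Rightarrow> bool" where
  "good W R S t \<longleftrightarrow> (\<forall>A. A \<subset> S \<longrightarrow> \<not> cons W R S t A)"
definition TS :: "(nat\<Rightarrow>nat\<Rightarrow>nat) \<Rightarrow> (nat\<Rightarrow>nat) \<Rightarrow> nat set \<Rightarrow> (nat\<Rightarrow>nat) set" where
  "TS W R S = {t \<in> (\<Pi>\<^sub>E j\<in>S. {1..vl W R S j}). good W R S t}"
definition RB :: "(nat\<Rightarrow>nat\<Rightarrow>nat) \<Rightarrow> nat set \<Rightarrow> nat \<Rightarrow> nat" where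
  "RB W B j = (\<Sum>i\<in>B. W i j)"

lemma vl_split:
  assumes "finite S" "B \<subseteq> S" "A' \<subseteq> S - B" "j \<in> S - B"
  shows "vl W R (A' \<union> B) j = R j + vl W (RB W B) A' j"
proof -
  have "(A' \<union> B) - {j} = (A' - {j}) \<union> B" using assms by auto
  moreover have "(\<Sum>i\<in>(A' - {j}) \<union> B. W i j) = (\<Sum>i\<in>A' - {j}. W i j) + (\<Sum>i\<in>B. W i j)"
    using assms by (intro sum.union_disjoint) (auto intro: finite_subset[of _ S])
  ultimately show ?thesis unfolding vl_def RB_def by simp
qed

lemma vl_mono: "finite S \<Longrightarrow> A \<subseteq> S \<Longrightarrow> vl W R A j \<le> vl W R S j"
  unfolding vl_def by (auto intro: sum_mono2)

lemma fiber_good: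
  assumes fin: "finite S" and BS: "B \<subseteq> S" and Bdef: "B = {j\<in>S. t j \<le> R j}"
  shows "good W R S t \<longleftrightarrow> good W (RB W B) (S - B) (\<lambda>j. t j - R j)"
proof -
  have hB: "\<And>j. j \<in> B \<Longrightarrow> t j \<le> R j" using Bdef by auto
  have hnB: "\<And>j. j \<in> S - B \<Longrightarrow> R j < t j" using Bdef by auto
  have key: "cons W R S t (A' \<union> B) \<longleftrightarrow> cons W (RB W B) (S - B) (\<lambda>j. t j - R j) A'"
    if "A' \<subseteq> S - B" for A'
  proof -
    have a: "j \<in> A' \<union> B \<longleftrightarrow> t j \<le> vl W R (A' \<union> B) j" if "j \<in> B" for j
      using that hB[OF that] unfolding vl_def by auto
    have b: "(j \<in> A' \<union> B \<longleftrightarrow> t j \<le> vl W R (A' \<union> B) j) \<longleftrightarrow>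
             (j \<in> A' \<longleftrightarrow> t j - R j \<le> vl W (RB W B) A' j)" if "j \<in> S - B" for j
      using that vl_split[OF fin BS \<open>A' \<subseteq> S - B\<close> that, of W R] hnB[OF that] by auto
    show ?thesis unfolding cons_def
    proof
      assume H: "\<forall>j\<in>S. (j \<in> A' \<union> B) = (t j \<le> vl W R (A' \<union> B) j)"
      show "\<forall>j\<in>S - B. (j \<in> A') = (t j - R j \<le> vl W (RB W B) A' j)"
        using H b by blast
    next
      assume H: "\<forall>j\<in>S - B. (j \<in> A') = (t j - R j \<le> vl W (RB W B) A' j)"
      show "\<forall>j\<in>S. (j \<in> A' \<union> B) = (t j \<le> vl W R (A' \<union> B) j)"
      proof
        fix j assume "j \<in> S"
        then show "(j \<in> A' \<union> B) = (t j \<le> vl W R (A' \<union> B) j)"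
          using H a b by (cases "j \<in> B") auto
      qed
    qed
  qed
  have contB: "B \<subseteq> A" if "cons W R S t A" for A
    using that hB BS unfolding cons_def vl_def by fastforce
  show ?thesis
  proof
    assume g: "good W R S t"
    show "good W (RB W B) (S - B) (\<lambda>j. t j - R j)"
      unfolding good_def
    proof (intro allI impI notI)
      fix A' assume "A' \<subset> S - B" "cons W (RB W B) (S - B) (\<lambda>j. t j - R j) A'"
      then have "cons W R S t (A' \<union> B)" using key by auto
      moreover have "A' \<union> B \<subset> S" using \<open>A' \<subset> S - B\<close> BS by auto
      ultimately show False using g unfolding good_def by auto
    qed
  next
    assume g: "good W (RB W B) (S - B) (\<lambda>j. t j - R j)"
    show "good W R S t"
      unfolding good_def
    proof (intro allI impI notI)
      fix A assume A: "A \<subset> S" "cons W R S t A"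
      have "B \<subseteq> A" using contB A by auto
      then have eq: "A = (A - B) \<union> B" by auto
      have "cons W (RB W B) (S - B) (\<lambda>j. t j - R j) (A - B)"
        using key[of "A - B"] A eq by auto
      moreover have "A - B \<subset> S - B" using A \<open>B \<subseteq> A\<close> by auto
      ultimately show False using g unfolding good_def by auto
    qed
  qed
qed

lemma good_cong: "(\<And>j. j \<in> S \<Longrightarrow> t j = t2 j) \<Longrightarrow> good W R S t = good W R S t2"
  unfolding good_def cons_def by simp

lemma fiber_card:
  assumes fin: "finite S" and BS: "B \<subseteq> S"
  shows "card {t \<in> TS W R S. {j\<in>S. t j \<le> R j} = B}
       = (\<Prod>j\<in>B. R j) * card (TS W (RB W B) (S - B))"
proof -
  let ?F = "{t \<in> TS W R S. {j\<in>S. t j \<le> R j} = B}"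
  let ?P = "(\<Pi>\<^sub>E j\<in>B. {1..R j}) \<times> TS W (RB W B) (S - B)"
  have vS: "vl W R S j = R j + vl W (RB W B) (S - B) j" if "j \<in> S - B" for j
  proof -
    have "S - B \<union> B = S" using BS by auto
    then show ?thesis using vl_split[OF fin BS _ that, of "S - B" W R] by simp
  qed
  define f where "f t = (restrict t B, restrict (\<lambda>j. t j - R j) (S - B))" for t :: "nat \<Rightarrow> nat"
  define g where "g p = (\<lambda>j. if j \<in> B then fst p j else if j \<in> S - B then snd p j + R j else undefined)"
    for p :: "(nat \<Rightarrow> nat) \<times> (nat \<Rightarrow> nat)"
  have "bij_betw f ?F ?P"
  proof (rule bij_betw_byWitness[where f'=g])
    show "\<forall>a\<in>?F. g (f a) = a"
    proof
      fix t assume "t \<in> ?F"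
      then have t: "t \<in> (\<Pi>\<^sub>E j\<in>S. {1..vl W R S j})" "B = {j\<in>S. t j \<le> R j}" unfolding TS_def by auto
      show "g (f t) = t"
      proof
        fix j show "g (f t) j = t j"
          using t PiE_arb[OF t(1), of j] unfolding f_def g_def by auto
      qed
    qed
    show "\<forall>p\<in>?P. f (g p) = p"
    proof
      fix p assume p: "p \<in> ?P"
      obtain u t' where pe: "p = (u, t')" by (cases p)
      have u: "u \<in> (\<Pi>\<^sub>E j\<in>B. {1..R j})" and t': "t' \<in> (\<Pi>\<^sub>E j\<in>S - B. {1..vl W (RB W B) (S - B) j})"
        using p pe unfolding TS_def by auto
      have "restrict (g p) B = u"
        using PiE_arb[OF u] unfolding g_def pe by (auto simp: restrict_def)
      moreover have "restrict (\<lambda>j. g p j - R j) (S - B) = t'"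
        using PiE_arb[OF t'] unfolding g_def pe by (auto simp: restrict_def)
      ultimately show "f (g p) = p" unfolding f_def pe by simp
    qed
    show "f ` ?F \<subseteq> ?P"
    proof
      fix y assume "y \<in> f ` ?F"
      then obtain t where tF: "t \<in> ?F" and y: "y = f t" by auto
      then have t: "t \<in> (\<Pi>\<^sub>E j\<in>S. {1..vl W R S j})" "B = {j\<in>S. t j \<le> R j}" "good W R S t"
        unfolding TS_def by auto
      have "restrict t B \<in> (\<Pi>\<^sub>E j\<in>B. {1..R j})"
        using t BS by (auto simp: PiE_iff)
      moreover have "restrict (\<lambda>j. t j - R j) (S - B) \<in> (\<Pi>\<^sub>E j\<in>S - B. {1..vl W (RB W B) (S - B) j})"
        using t vS by (fastforce simp: PiE_iff)
      moreover have "good W (RB W B) (S - B) (restrict (\<lambda>j. t j - R j) (S - B))"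
        using fiber_good[OF fin BS t(2), of W] t(3) good_cong[of "S - B" "restrict (\<lambda>j. t j - R j) (S - B)" "\<lambda>j. t j - R j"]
        by simp
      ultimately show "y \<in> ?P" unfolding y f_def TS_def by auto
    qed
    show "g ` ?P \<subseteq> ?F"
    proof
      fix y assume "y \<in> g ` ?P"
      then obtain p where p: "p \<in> ?P" and y: "y = g p" by auto
      obtain u t' where pe: "p = (u, t')" by (cases p)
      have u: "u \<in> (\<Pi>\<^sub>E j\<in>B. {1..R j})" and t': "t' \<in> (\<Pi>\<^sub>E j\<in>S - B. {1..vl W (RB W B) (S - B) j})"
        and gt': "good W (RB W B) (S - B) t'"
        using p pe unfolding TS_def by auto
      have B: "B = {j\<in>S. y j \<le> R j}"
      proof (intro set_eqI iffI)
        fix j assume "j \<in> B"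
        then show "j \<in> {j\<in>S. y j \<le> R j}" using u BS unfolding y g_def pe by (auto simp: PiE_iff)
      next
        fix j assume "j \<in> {j\<in>S. y j \<le> R j}"
        then have "j \<in> S" "y j \<le> R j" by auto
        moreover have "j \<in> S - B \<Longrightarrow> t' j \<ge> 1" using t' by (auto simp: PiE_iff)
        ultimately show "j \<in> B" unfolding y g_def pe by (cases "j \<in> B") auto
      qed
      have "y \<in> (\<Pi>\<^sub>E j\<in>S. {1..vl W R S j})"
      proof -
        have "y j \<in> {1..vl W R S j}" if "j \<in> S" for j
        proof (cases "j \<in> B")
          case True then show ?thesis using u unfolding y g_def pe vl_def by (auto simp: PiE_iff)
        next
          case False
          then have "j \<in> S - B" using that by auto
          then have "1 \<le> t' j" "t' j \<le> vl W (RB W B) (S - B) j" using t' by (auto simp: PiE_iff)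
          then show ?thesis using \<open>j \<in> S - B\<close> vS[of j] unfolding y g_def pe by auto
        qed
        moreover have "y j = undefined" if "j \<notin> S" for j using that BS unfolding y g_def by auto
        ultimately show ?thesis by (auto simp: PiE_iff extensional_def)
      qed
      moreover have "good W R S y"
        using fiber_good[OF fin BS B, of W] gt' good_cong[of "S - B" t' "\<lambda>j. y j - R j"]
        unfolding y g_def pe by auto
      ultimately show "y \<in> ?F" using B unfolding TS_def by auto
    qed
  qed
  then have "card ?F = card ?P" by (rule bij_betw_same_card)
  also have "\<dots> = (\<Prod>j\<in>B. R j) * card (TS W (RB W B) (S - B))"
  proof -
    have "finite B" using fin BS finite_subset by auto
    then have "card (\<Pi>\<^sub>E j\<in>B. {1..R j}) = (\<Prod>j\<in>B. R j)" by (simp add: card_PiE)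
    then show ?thesis by (simp add: card_cartesian_product)
  qed
  finally show ?thesis .
qed

lemma TS_finite: "finite S \<Longrightarrow> finite (TS W R S)"
  unfolding TS_def by (rule finite_subset[of _ "(\<Pi>\<^sub>E j\<in>S. {1..vl W R S j})"]) (auto intro: finite_PiE)

lemma TS_empty: "card (TS W R {}) = 1"
proof -
  have "TS W R {} = {\<lambda>_. undefined}" unfolding TS_def good_def by auto
  then show ?thesis by simp
qed

lemma TS_rec:
  assumes fin: "finite S" and ne: "S \<noteq> {}"
  shows "card (TS W R S) = (\<Sum>B\<in>Pow S - {{}}. (\<Prod>j\<in>B. R j) * card (TS W (RB W B) (S - B)))"
proof -
  let ?g = "\<lambda>t. {j\<in>S. t j \<le> R j}"
  have "card (TS W R S) = (\<Sum>t\<in>TS W R S. 1)" by simp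
  also have "\<dots> = (\<Sum>B\<in>Pow S. (\<Sum>t\<in>{t \<in> TS W R S. ?g t = B}. 1))"
    by (rule sum.group[symmetric]) (use fin TS_finite in auto)
  also have "\<dots> = (\<Sum>B\<in>Pow S. card {t \<in> TS W R S. ?g t = B})" by simp
  also have "\<dots> = (\<Sum>B\<in>Pow S - {{}}. card {t \<in> TS W R S. ?g t = B})"
  proof -
    have "{t \<in> TS W R S. ?g t = {}} = {}"
    proof (intro equalityI subsetI)
      fix t assume "t \<in> {t \<in> TS W R S. ?g t = {}}"
      then have g: "good W R S t" and e: "\<forall>j\<in>S. R j < t j" unfolding TS_def by auto
      have "cons W R S t {}" using e unfolding cons_def vl_def by auto
      moreover have "{} \<subset> S" using ne by auto
      ultimately show "t \<in> {}" using g unfolding good_def by auto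
    qed auto
    then have "card {t \<in> TS W R S. ?g t = {}} = 0" by (metis card.empty)
    moreover have "{} \<in> Pow S" by simp
    ultimately show ?thesis using fin sum.remove[of "Pow S" "{}" "\<lambda>B. card {t \<in> TS W R S. ?g t = B}"]
      by simp
  qed
  also have "\<dots> = (\<Sum>B\<in>Pow S - {{}}. (\<Prod>j\<in>B. R j) * card (TS W (RB W B) (S - B)))"
    using fiber_card[OF fin] by (intro sum.cong) auto
  finally show ?thesis .
qed

inductive rch :: "(nat \<Rightarrow> nat) \<Rightarrow> nat \<Rightarrow> bool" for jv where
  r0: "rch jv 0"
| rs: "rch jv (jv i) \<Longrightarrow> rch jv i"

definition forests :: "nat set \<Rightarrow> (nat \<Rightarrow> nat) set" where
  "forests S = {jv \<in> S \<rightarrow>\<^sub>E insert 0 S. \<forall>i\<in>S. jv i \<noteq> i \<and> rch jv i}"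
definition wt :: "(nat\<Rightarrow>nat\<Rightarrow>nat) \<Rightarrow> (nat\<Rightarrow>nat) \<Rightarrow> (nat \<Rightarrow> nat) \<Rightarrow> nat \<Rightarrow> nat" where
  "wt W R jv j = (if jv j = 0 then R j else W (jv j) j)"
definition FS :: "(nat\<Rightarrow>nat\<Rightarrow>nat) \<Rightarrow> (nat\<Rightarrow>nat) \<Rightarrow> nat set \<Rightarrow> nat" where
  "FS W R S = (\<Sum>jv\<in>forests S. \<Prod>j\<in>S. wt W R jv j)"

lemma forests_finite: "finite S \<Longrightarrow> finite (forests S)"
  unfolding forests_def by (rule finite_subset[of _ "S \<rightarrow>\<^sub>E insert 0 S"]) (auto intro: finite_PiE)

lemma FS_empty: "FS W R {} = 1"
proof -
  have "forests {} = {\<lambda>_. undefined}" unfolding forests_def by auto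
  then show ?thesis unfolding FS_def by simp
qed

lemma rch_transfer:
  assumes z: "0 \<notin> S'" and hB: "\<And>b. b \<in> B \<Longrightarrow> jv b = 0"
    and h: "\<And>j. j \<in> S' \<Longrightarrow> (jv j \<in> B \<and> jv' j = 0) \<or> (jv j \<in> S' \<and> jv' j = jv j)"
  shows "x \<in> S' \<Longrightarrow> rch jv x \<longleftrightarrow> rch jv' x"
proof
  show "rch jv x \<Longrightarrow> x \<in> S' \<Longrightarrow> rch jv' x"
  proof (induction rule: rch.induct)
    case r0 then show ?case using z by simp
  next
    case (rs i)
    from h[OF rs.prems] show ?case
    proof
      assume "jv i \<in> B \<and> jv' i = 0"
      then show ?thesis by (metis rch.r0 rch.rs)
    next
      assume "jv i \<in> S' \<and> jv' i = jv i"
      then show ?thesis using rs.IH by (metis rch.rs)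
    qed
  qed
  show "rch jv' x \<Longrightarrow> x \<in> S' \<Longrightarrow> rch jv x"
  proof (induction rule: rch.induct)
    case r0 then show ?case using z by simp
  next
    case (rs i)
    from h[OF rs.prems] show ?case
    proof
      assume "jv i \<in> B \<and> jv' i = 0"
      then show ?thesis using hB by (metis rch.r0 rch.rs)
    next
      assume "jv i \<in> S' \<and> jv' i = jv i"
      then show ?thesis using rs.IH by (metis rch.rs)
    qed
  qed
qed

lemma forest_has_root:
  assumes "jv \<in> forests S" "0 \<notin> S" "i \<in> S"
  shows "\<exists>j\<in>S. jv j = 0"
proof (rule ccontr)
  assume nr: "\<not> (\<exists>j\<in>S. jv j = 0)"
  have m: "\<And>j. j \<in> S \<Longrightarrow> jv j \<in> insert 0 S" using assms(1) unfolding forests_def by (auto simp: PiE_iff)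
  have "rch jv x \<Longrightarrow> x \<in> S \<Longrightarrow> False" for x
  proof (induction rule: rch.induct)
    case r0 then show ?case using assms(2) by simp
  next
    case (rs i) then show ?case using m[of i] nr by auto
  qed
  moreover have "rch jv i" using assms(1,3) unfolding forests_def by auto
  ultimately show False using assms(3) by blast
qed

lemma forest_fiber:
  assumes fin: "finite S" and z: "0 \<notin> S" and BS: "B \<subseteq> S"
  shows "(\<Sum>jv\<in>{jv \<in> forests S. {j\<in>S. jv j = 0} = B}. \<Prod>j\<in>S. wt W R jv j)
       = (\<Prod>j\<in>B. R j) * FS W (RB W B) (S - B)"
proof -
  define S' where "S' = S - B"
  let ?F = "{jv \<in> forests S. {j\<in>S. jv j = 0} = B}"
  define C where "C jv' j = (if jv' j = 0 then B else {jv' j})" for jv' :: "nat \<Rightarrow> nat" and j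
  let ?Sig = "SIGMA jv':forests S'. (\<Pi>\<^sub>E j\<in>S'. C jv' j)"
  define h where "h a = (\<lambda>j. if j \<in> B then 0 else snd a j)" for a :: "(nat \<Rightarrow> nat) \<times> (nat \<Rightarrow> nat)"
  define ph where "ph jv = restrict (\<lambda>j. if jv j \<in> B then 0 else jv j) S'" for jv :: "nat \<Rightarrow> nat"
  define ii where "ii jv = (ph jv, restrict jv S')" for jv :: "nat \<Rightarrow> nat"
  have finB: "finite B" using fin BS finite_subset by auto
  have finS': "finite S'" using fin unfolding S'_def by auto
  have dS: "S = B \<union> S'" "B \<inter> S' = {}" using BS unfolding S'_def by auto
  have z': "0 \<notin> S'" using z unfolding S'_def by auto
  have L: "(\<Prod>j\<in>S. wt W R jv j) = (\<Prod>j\<in>B. R j) * (\<Prod>j\<in>S'. W (jv j) j)" if "jv \<in> ?F" for jv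
  proof -
    have r: "\<And>j. j \<in> B \<Longrightarrow> jv j = 0" "\<And>j. j \<in> S' \<Longrightarrow> jv j \<noteq> 0"
      using that unfolding S'_def by auto
    have "(\<Prod>j\<in>S. wt W R jv j) = (\<Prod>j\<in>B. wt W R jv j) * (\<Prod>j\<in>S'. wt W R jv j)"
      unfolding dS(1) by (rule prod.union_disjoint) (use finB finS' dS(2) in auto)
    also have "\<dots> = (\<Prod>j\<in>B. R j) * (\<Prod>j\<in>S'. W (jv j) j)"
      using r unfolding wt_def by (intro arg_cong2[where f="(*)"] prod.cong) force+
    finally show ?thesis .
  qed
  have "(\<Sum>jv\<in>?F. \<Prod>j\<in>S. wt W R jv j) = (\<Prod>j\<in>B. R j) * (\<Sum>jv\<in>?F. \<Prod>j\<in>S'. W (jv j) j)"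
    using L by (simp add: sum_distrib_left)
  also have "(\<Sum>jv\<in>?F. \<Prod>j\<in>S'. W (jv j) j) = (\<Sum>a\<in>?Sig. \<Prod>j\<in>S'. W (snd a j) j)"
  proof (rule sum.reindex_bij_witness[symmetric, where i=ii and j=h])
    fix a assume a: "a \<in> ?Sig"
    obtain jv' p where ap: "a = (jv', p)" by (cases a)
    have jv': "jv' \<in> S' \<rightarrow>\<^sub>E insert 0 S'" "\<And>i. i \<in> S' \<Longrightarrow> jv' i \<noteq> i \<and> rch jv' i"
      using a ap unfolding forests_def by auto
    have p: "p \<in> (\<Pi>\<^sub>E j\<in>S'. C jv' j)" using a ap by auto
    have pj: "(p j \<in> B \<and> jv' j = 0) \<or> (p j \<in> S' \<and> jv' j = p j \<and> p j \<noteq> 0)" if "j \<in> S'" for j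
    proof (cases "jv' j = 0")
      case True then show ?thesis using p that unfolding C_def by (auto simp: PiE_iff)
    next
      case False
      then have "p j = jv' j" using p that unfolding C_def by (auto simp: PiE_iff)
      moreover have "jv' j \<in> S'" using jv'(1) that False by (auto simp: PiE_iff)
      ultimately show ?thesis using False by auto
    qed
    have hj: "h a j = p j" if "j \<in> S'" for j using that dS unfolding h_def ap by auto
    show "h a \<in> ?F"
    proof -
      have "h a \<in> S \<rightarrow>\<^sub>E insert 0 S"
      proof -
        have "h a j \<in> insert 0 S" if "j \<in> S" for j
        proof (cases "j \<in> B")
          case True then show ?thesis unfolding h_def by simp
        next
          case False then have "j \<in> S'" using that unfolding S'_def by auto
          then show ?thesis using pj[of j] hj[of j] dS by auto
        qed
        moreover have "h a j = undefined" if "j \<notin> S" for j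
          using that p dS PiE_arb[OF p, of j] unfolding h_def ap by auto
        ultimately show ?thesis by (auto simp: PiE_iff extensional_def)
      qed
      moreover have roots: "{j\<in>S. h a j = 0} = B"
      proof (intro set_eqI iffI)
        fix j assume "j \<in> {j\<in>S. h a j = 0}"
        then show "j \<in> B" using pj[of j] hj[of j] z dS unfolding S'_def by auto
      qed (use BS h_def in auto)
      moreover have "h a i \<noteq> i \<and> rch (h a) i" if "i \<in> S" for i
      proof (cases "i \<in> B")
        case True
        then have "h a i = 0" unfolding h_def by simp
        moreover have "i \<noteq> 0" using z that by (metis)
        ultimately show ?thesis by (metis rch.r0 rch.rs)
      next
        case False then have iS': "i \<in> S'" using that unfolding S'_def by auto
        have ne: "h a i \<noteq> i" using pj[OF iS'] hj[OF iS'] jv'(2)[OF iS'] iS' dS(2) by auto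
        have "rch (h a) i \<longleftrightarrow> rch jv' i"
        proof (rule rch_transfer[OF z' _ _ iS', where B=B])
          show "\<And>b. b \<in> B \<Longrightarrow> h a b = 0" unfolding h_def by simp
          show "\<And>j. j \<in> S' \<Longrightarrow> h a j \<in> B \<and> jv' j = 0 \<or> h a j \<in> S' \<and> jv' j = h a j"
            using pj hj by metis
        qed
        then show ?thesis using ne jv'(2)[OF iS'] by auto
      qed
      ultimately show ?thesis unfolding forests_def by auto
    qed
    show "ii (h a) = a"
    proof -
      have "restrict (h a) S' = p"
      proof
        fix j show "restrict (h a) S' j = p j" using hj PiE_arb[OF p, of j] by (auto simp: restrict_def)
      qed
      moreover have "ph (h a) = jv'"
      proof
        fix j show "ph (h a) j = jv' j"
        proof (cases "j \<in> S'")
          case True then show ?thesis using pj[OF True] hj[OF True] dS(2) unfolding ph_def by auto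
        next
          case False then show ?thesis using PiE_arb[OF jv'(1), of j] unfolding ph_def by auto
        qed
      qed
      ultimately show ?thesis unfolding ii_def ap by simp
    qed
    show "(\<Prod>j\<in>S'. W (h a j) j) = (\<Prod>j\<in>S'. W (snd a j) j)"
      using hj unfolding ap by simp
  next
    fix b assume b: "b \<in> ?F"
    have bm: "b \<in> S \<rightarrow>\<^sub>E insert 0 S" "\<And>i. i \<in> S \<Longrightarrow> b i \<noteq> i \<and> rch b i"
      using b unfolding forests_def by auto
    have rt: "\<And>j. j \<in> B \<Longrightarrow> b j = 0" "\<And>j. j \<in> S' \<Longrightarrow> b j \<noteq> 0"
      using b unfolding S'_def by auto
    have bS': "b j \<in> B \<or> b j \<in> S'" if "j \<in> S'" for j
    proof -
      have "j \<in> S" using that dS by auto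
      then have "b j \<in> insert 0 S" using bm(1) by (auto simp: PiE_iff)
      then show ?thesis using rt(2)[OF that] dS(1) by blast
    qed
    show "h (ii b) = b"
    proof
      fix j show "h (ii b) j = b j"
        using rt(1) PiE_arb[OF bm(1), of j] dS unfolding h_def ii_def by auto
    qed
    have phj: "(b j \<in> B \<and> ph b j = 0) \<or> (b j \<in> S' \<and> ph b j = b j)" if "j \<in> S'" for j
      using bS'[OF that] that dS(2) unfolding ph_def by auto
    have "ph b \<in> forests S'"
    proof -
      have "ph b \<in> S' \<rightarrow>\<^sub>E insert 0 S'" using phj unfolding ph_def[symmetric]
        by (auto simp: PiE_iff ph_def)
      moreover have "ph b i \<noteq> i \<and> rch (ph b) i" if iS': "i \<in> S'" for i
      proof -
        have "rch b i \<longleftrightarrow> rch (ph b) i"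
          by (rule rch_transfer[OF z' _ _ iS', where B=B]) (use rt(1) phj in auto)
        moreover have "i \<in> S" using iS' dS by auto
        ultimately show ?thesis using bm(2)[of i] phj[OF iS'] iS' z' by auto
      qed
      ultimately show ?thesis unfolding forests_def by auto
    qed
    moreover have "restrict b S' \<in> (\<Pi>\<^sub>E j\<in>S'. C (ph b) j)"
    proof -
      have "b j \<in> C (ph b) j" if "j \<in> S'" for j
      proof (cases "b j \<in> B")
        case True then show ?thesis using phj[OF that] dS(2) unfolding C_def by auto
      next
        case False then have "b j \<in> S'" "ph b j = b j" using phj[OF that] by auto
        moreover then have "b j \<noteq> 0" using z' by metis
        ultimately show ?thesis unfolding C_def by auto
      qed
      then show ?thesis by (auto simp: PiE_iff)
    qed
    ultimately show "ii b \<in> ?Sig" unfolding ii_def by auto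
  qed
  also have "\<dots> = (\<Sum>jv'\<in>forests S'. \<Sum>p\<in>(\<Pi>\<^sub>E j\<in>S'. C jv' j). \<Prod>j\<in>S'. W (p j) j)"
    by (subst sum.Sigma) (use finS' forests_finite finB C_def in \<open>auto intro!: finite_PiE simp: split_beta\<close>)
  also have "\<dots> = (\<Sum>jv'\<in>forests S'. \<Prod>j\<in>S'. \<Sum>c\<in>C jv' j. W c j)"
    by (rule sum.cong[OF refl], rule prod_sum_PiE[symmetric]) (use finS' finB C_def in auto)
  also have "\<dots> = FS W (RB W B) S'"
    unfolding FS_def wt_def RB_def C_def by (intro sum.cong prod.cong) auto
  finally show ?thesis unfolding S'_def .
qed

lemma FS_rec:
  assumes fin: "finite S" and z: "0 \<notin> S" and ne: "S \<noteq> {}"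
  shows "FS W R S = (\<Sum>B\<in>Pow S - {{}}. (\<Prod>j\<in>B. R j) * FS W (RB W B) (S - B))"
proof -
  let ?g = "\<lambda>jv. {j\<in>S. jv j = 0}"
  let ?f = "\<lambda>jv. \<Prod>j\<in>S. wt W R jv j"
  have "FS W R S = (\<Sum>B\<in>Pow S. (\<Sum>jv\<in>{jv \<in> forests S. ?g jv = B}. ?f jv))"
    unfolding FS_def by (rule sum.group[symmetric]) (use fin forests_finite in auto)
  also have "\<dots> = (\<Sum>B\<in>Pow S - {{}}. (\<Sum>jv\<in>{jv \<in> forests S. ?g jv = B}. ?f jv))"
  proof -
    obtain i where i: "i \<in> S" using ne by auto
    have "{jv \<in> forests S. ?g jv = {}} = {}"
      using forest_has_root[OF _ z i] by auto
    then have "(\<Sum>jv\<in>{jv \<in> forests S. ?g jv = {}}. ?f jv) = 0" by (metis sum.empty)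
    moreover have "{} \<in> Pow S" by simp
    ultimately show ?thesis using fin sum.remove[of "Pow S" "{}" "\<lambda>B. (\<Sum>jv\<in>{jv \<in> forests S. ?g jv = B}. ?f jv)"]
      by simp
  qed
  also have "\<dots> = (\<Sum>B\<in>Pow S - {{}}. (\<Prod>j\<in>B. R j) * FS W (RB W B) (S - B))"
    using forest_fiber[OF fin z] by (intro sum.cong) auto
  finally show ?thesis .
qed

lemma TS_FS: "finite S \<Longrightarrow> 0 \<notin> S \<Longrightarrow> card (TS W R S) = FS W R S"
proof (induction "card S" arbitrary: S R rule: less_induct)
  case less
  show ?case
  proof (cases "S = {}")
    case True then show ?thesis using TS_empty FS_empty by simp
  next
    case False
    have "card (TS W R S) = (\<Sum>B\<in>Pow S - {{}}. (\<Prod>j\<in>B. R j) * card (TS W (RB W B) (S - B)))"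
      by (rule TS_rec[OF less.prems(1) False])
    also have "\<dots> = (\<Sum>B\<in>Pow S - {{}}. (\<Prod>j\<in>B. R j) * FS W (RB W B) (S - B))"
    proof (rule sum.cong[OF refl])
      fix B assume B: "B \<in> Pow S - {{}}"
      then have "card (S - B) < card S" using less.prems(1) by (intro psubset_card_mono) auto
      then show "(\<Prod>j\<in>B. R j) * card (TS W (RB W B) (S - B)) = (\<Prod>j\<in>B. R j) * FS W (RB W B) (S - B)"
        using less.hyps[of "S - B" "RB W B"] less.prems by auto
    qed
    also have "\<dots> = FS W R S" by (rule FS_rec[symmetric, OF less.prems False])
    finally show ?thesis .
  qed
qed



definition tm :: "nat \<Rightarrow> nat \<Rightarrow> nat \<Rightarrow> nat" where
  "tm n kp q = (if q \<le> kp then kp + 1 - q else n + kp + 1 - q)"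
definition tmi :: "nat \<Rightarrow> nat \<Rightarrow> nat \<Rightarrow> nat" where
  "tmi n kp t = (if t \<le> kp + 1 then kp + 1 - t else n + kp + 1 - t)"

lemma tm_range: "kp < n \<Longrightarrow> q < n \<Longrightarrow> tm n kp q \<in> {1..n}"
  unfolding tm_def by auto
lemma tmi_range: "kp < n \<Longrightarrow> t \<in> {1..n} \<Longrightarrow> tmi n kp t < n"
  unfolding tmi_def by auto
lemma tmi_tm: "kp < n \<Longrightarrow> q < n \<Longrightarrow> tmi n kp (tm n kp q) = q"
  unfolding tm_def tmi_def by auto
lemma tm_tmi: "kp < n \<Longrightarrow> t \<in> {1..n} \<Longrightarrow> tm n kp (tmi n kp t) = t"
  unfolding tm_def tmi_def by auto

lemma cyc_step:
  fixes g :: "nat \<Rightarrow> int"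
  assumes kn: "kp < n" and g0: "\<And>m. m \<le> kp \<Longrightarrow> g m = 0"
    and gw: "\<And>m. kp < m \<Longrightarrow> m \<le> n \<Longrightarrow> g m = w" and q: "q < n" and h: "h \<le> n"
  shows "cyc g q n h = (if tm n kp q \<le> h then w else 0)"
proof (cases "q \<le> kp")
  case True
  then have gq: "g q = 0" using g0 by auto
  have gn: "g n = w" using gw kn by auto
  show ?thesis
  proof (cases "h \<le> n - q")
    case True
    then show ?thesis using gq g0[of "q+h"] gw[of "q+h"] \<open>q \<le> kp\<close> q unfolding cyc_def tm_def by auto
  next
    case False
    then show ?thesis using gq gn g0[of "h - (n - q)"] \<open>q \<le> kp\<close> q h kn unfolding cyc_def tm_def by auto
  qed
next
  case False
  then have gq: "g q = w" using gw q by auto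
  have gn: "g n = w" using gw kn by auto
  show ?thesis
  proof (cases "h \<le> n - q")
    case True
    then show ?thesis using gq gw[of "q+h"] \<open>\<not> q \<le> kp\<close> q unfolding cyc_def tm_def by auto
  next
    case False
    then show ?thesis using gq gn g0[of "h - (n - q)"] gw[of "h - (n - q)"] \<open>\<not> q \<le> kp\<close> q h kn unfolding cyc_def tm_def by auto
  qed
qed

lemma cyc_diag:
  fixes g :: "nat \<Rightarrow> int"
  assumes g: "\<And>m. m \<le> n \<Longrightarrow> g m = - int m" and q: "q < n" and h: "h \<le> n"
  shows "cyc g q n h = - int h"
proof (cases "h \<le> n - q")
  case True then show ?thesis using g[of "q+h"] g[of q] q unfolding cyc_def by auto
next
  case False then show ?thesis using g[of "h - (n - q)"] g[of q] g[of n] q h unfolding cyc_def by auto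
qed

lemma iter_rch_aux:
  "((\<lambda>m. if m = 0 then 0 else jv m) ^^ t) i = 0 \<Longrightarrow> (\<exists>t. ((\<lambda>m. if m = 0 then 0 else jv m) ^^ t) i = 0)"
  by blast


lemma iter_rch:
  "(\<exists>t. ((\<lambda>m. if m = 0 then 0 else jv m) ^^ t) i = 0) \<longleftrightarrow> rch jv i"
proof
  let ?f = "\<lambda>m. if m = 0 then 0 else jv m"
  assume "\<exists>t. (?f ^^ t) i = 0"
  then obtain t where "(?f ^^ t) i = 0" by blast
  then show "rch jv i"
  proof (induction t arbitrary: i)
    case 0 then show ?case by (simp add: rch.r0)
  next
    case (Suc t)
    have "(?f ^^ t) (?f i) = 0" using Suc.prems by (simp add: funpow_Suc_right del: funpow.simps)
    then have "rch jv (?f i)" by (rule Suc.IH)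
    then show ?case by (cases "i = 0") (auto intro: rch.intros)
  qed
next
  let ?f = "\<lambda>m. if m = 0 then 0 else jv m"
  assume "rch jv i"
  then show "\<exists>t. (?f ^^ t) i = 0"
  proof (induction rule: rch.induct)
    case r0 then show ?case by (metis funpow_0)
  next
    case (rs i)
    then obtain t where t: "(?f ^^ t) (jv i) = 0" by blast
    show ?case
    proof (cases "i = 0")
      case True then show ?thesis by (metis funpow_0)
    next
      case False
      then have "(?f ^^ Suc t) i = 0" using t by (simp add: funpow_Suc_right del: funpow.simps)
      then show ?thesis by blast
    qed
  qed
qed

lemma elem_forests_eq: "elem_forests d = forests {1..d}"
proof -
  have "insert 0 {1..d} = {0..d}" by auto
  then show ?thesis unfolding elem_forests_def forests_def iter_rch by simp
qed

theorem lemma4p4: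
  fixes d :: nat and r :: "nat \<Rightarrow> int" and x :: "nat \<Rightarrow> nat \<Rightarrow> nat \<Rightarrow> int"
    and k :: "nat \<Rightarrow> nat"
  assumes "d \<ge> 2"
    and "\<forall>i\<in>{1..d}. r i \<ge> 0" and "\<exists>i\<in>{1..d}. r i \<noteq> 0"
    and "in_S_bar d r x k"
    and "simple_system d x k"
  shows "int (card {q \<in> (\<Pi>\<^sub>E i\<in>{1..d}. {..<k i}). smallest_solution d r (cyc_fam x q k) k k})
         = (\<Sum>jv\<in>elem_forests d. \<Prod>i\<in>{1..d}. (if jv i = 0 then r i else x (jv i) i (k (jv i))))"
proof -
  define S where "S = {1..d}"
  have finS: "finite S" and z: "0 \<notin> S" unfolding S_def by auto
  have inS: "in_S d x k" and k1: "\<forall>i\<in>S. k i \<ge> 1" and sm: "smallest_solution d r x k k"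
    and diag: "\<forall>i\<in>S. \<forall>m\<le>k i. x i i m = - int m"
    using assms(4) unfolding in_S_bar_def S_def by auto
  have rpos: "\<forall>i\<in>S. r i \<ge> 0" using assms(2) unfolding S_def by auto
  have "\<forall>i\<in>S. \<exists>k'. k' \<le> k i - 1 \<and>
        (\<forall>m \<le> k'. \<forall>j\<in>S. j \<noteq> i \<longrightarrow> x i j m = 0) \<and>
        (\<forall>m. k' + 1 \<le> m \<and> m \<le> k i \<longrightarrow> (\<forall>j\<in>S. j \<noteq> i \<longrightarrow> x i j m = x i j (k i)))"
    using assms(5) unfolding simple_system_def S_def by auto
  from bchoice[OF this] obtain kp where kp: "\<forall>i\<in>S. kp i \<le> k i - 1 \<and>
        (\<forall>m \<le> kp i. \<forall>j\<in>S. j \<noteq> i \<longrightarrow> x i j m = 0) \<and>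
        (\<forall>m. kp i + 1 \<le> m \<and> m \<le> k i \<longrightarrow> (\<forall>j\<in>S. j \<noteq> i \<longrightarrow> x i j m = x i j (k i)))"
    by blast
  have kpk: "kp i < k i" if "i \<in> S" for i
  proof -
    have "kp i \<le> k i - 1" using conjunct1[OF bspec[OF kp that]] .
    moreover have "k i \<ge> 1" using k1 that by blast
    ultimately show ?thesis by linarith
  qed
  have kp0: "x i j m = 0" if "i \<in> S" "j \<in> S" "i \<noteq> j" "m \<le> kp i" for i j m
  proof -
    have H: "\<forall>m \<le> kp i. \<forall>j\<in>S. j \<noteq> i \<longrightarrow> x i j m = 0"
      using conjunct1[OF conjunct2[OF bspec[OF kp that(1)]]] .
    show ?thesis using H[rule_format, of m j] that(2,3,4) by simp
  qed
  have kpw: "x i j m = x i j (k i)" if "i \<in> S" "j \<in> S" "i \<noteq> j" "kp i < m" "m \<le> k i" for i j m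
  proof -
    have H: "\<forall>m. kp i + 1 \<le> m \<and> m \<le> k i \<longrightarrow> (\<forall>j\<in>S. j \<noteq> i \<longrightarrow> x i j m = x i j (k i))"
      using conjunct2[OF conjunct2[OF bspec[OF kp that(1)]]] .
    have "kp i + 1 \<le> m" using that(4) by simp
    then show ?thesis using H[rule_format, of m j] that(2,3,5) by simp
  qed
  have nonneg: "0 \<le> x i j (k i)" if "i \<in> S" "j \<in> S" "i \<noteq> j" for i j
  proof -
    have H: "\<forall>i\<in>{1..d}. \<forall>j\<in>{1..d}. i \<noteq> j \<longrightarrow> (\<forall>m. m < k i \<longrightarrow> x i j m \<le> x i j (Suc m))"
      using inS unfolding in_S_def by blast
    have "x i j (kp i) \<le> x i j (Suc (kp i))"
      using H kpk[OF that(1)] that unfolding S_def by simp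
    moreover have "x i j (kp i) = 0" using kp0 that by auto
    moreover have "x i j (Suc (kp i)) = x i j (k i)" using kpw[OF that, of "Suc (kp i)"] kpk[OF that(1)] by simp
    ultimately show ?thesis by simp
  qed
  define W where "W i j = nat (x i j (k i))" for i j
  define R where "R j = nat (r j)" for j
  have Wint: "int (W i j) = x i j (k i)" if "i \<in> S" "j \<in> S" "i \<noteq> j" for i j
    using nonneg[OF that] unfolding W_def by simp
  have Rint: "int (R j) = r j" if "j \<in> S" for j using rpos that unfolding R_def by simp
  have kvl: "k j = vl W R S j" if j: "j \<in> S" for j
  proof -
    have "r j + (\<Sum>i\<in>S. x i j (k i)) = 0" using sm j unfolding smallest_solution_def is_solution_def S_def by auto
    moreover have "(\<Sum>i\<in>S. x i j (k i)) = x j j (k j) + (\<Sum>i\<in>S - {j}. x i j (k i))"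
      using finS j by (simp add: sum.remove)
    moreover have "(\<Sum>i\<in>S - {j}. x i j (k i)) = (\<Sum>i\<in>S - {j}. int (W i j))"
      using Wint j by (intro sum.cong) auto
    ultimately have "int (k j) = int (R j) + int (\<Sum>i\<in>S - {j}. W i j)"
      using diag j Rint[OF j] by (simp add: of_nat_sum)
    then show ?thesis unfolding vl_def by linarith
  qed
  define Q0 where "Q0 = (\<Pi>\<^sub>E i\<in>S. {..<k i})"
  define Phi where "Phi q = restrict (\<lambda>i. tm (k i) (kp i) (q i)) S" for q :: "nat \<Rightarrow> nat"
  define Psi where "Psi t = restrict (\<lambda>i. tmi (k i) (kp i) (t i)) S" for t :: "nat \<Rightarrow> nat"
  have cycv: "cyc_fam x q k i j h = (if i = j then - int h else if Phi q i \<le> h then int (W i j) else 0)"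
    if q: "q \<in> Q0" and i: "i \<in> S" and j: "j \<in> S" and h: "h \<le> k i" for q i j h
  proof -
    have qi: "q i < k i" using q i unfolding Q0_def by auto
    show ?thesis
    proof (cases "i = j")
      case True
      then show ?thesis unfolding cyc_fam_def using cyc_diag[of "k i" "x i i" "q i" h] diag i qi h by auto
    next
      case False
      have "cyc (x i j) (q i) (k i) h = (if tm (k i) (kp i) (q i) \<le> h then x i j (k i) else 0)"
        by (rule cyc_step[OF kpk[OF i] kp0[OF i j False] kpw[OF i j False] qi h])
      then show ?thesis unfolding cyc_fam_def Phi_def using False i j Wint by auto
    qed
  qed
  have soleq: "r j + (\<Sum>i\<in>S. cyc_fam x q k i j (s i)) = 0 \<longleftrightarrow> s j = vl W R {i\<in>S. Phi q i \<le> s i} j"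
    if q: "q \<in> Q0" and s: "\<forall>i\<in>S. s i \<le> k i" and j: "j \<in> S" for q s j
  proof -
    have "(\<Sum>i\<in>S. cyc_fam x q k i j (s i)) = cyc_fam x q k j j (s j) + (\<Sum>i\<in>S - {j}. cyc_fam x q k i j (s i))"
      using finS j by (simp add: sum.remove)
    also have "\<dots> = - int (s j) + (\<Sum>i\<in>S - {j}. if Phi q i \<le> s i then int (W i j) else 0)"
      using cycv[OF q _ j] s j by (intro arg_cong2[where f="(+)"] sum.cong) auto
    also have "(\<Sum>i\<in>S - {j}. if Phi q i \<le> s i then int (W i j) else 0) = (\<Sum>i\<in>{i\<in>S - {j}. Phi q i \<le> s i}. int (W i j))"
      using finS by (intro sum.inter_filter[symmetric]) auto
    also have "{i\<in>S - {j}. Phi q i \<le> s i} = {i\<in>S. Phi q i \<le> s i} - {j}" by auto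
    finally have "r j + (\<Sum>i\<in>S. cyc_fam x q k i j (s i)) = int (R j) - int (s j) + int (\<Sum>i\<in>{i\<in>S. Phi q i \<le> s i} - {j}. W i j)"
      using Rint[OF j] by (simp add: of_nat_sum)
    then show ?thesis unfolding vl_def by linarith
  qed
  have solq: "is_solution d r (cyc_fam x q k) k s \<longleftrightarrow> (\<forall>i\<in>S. s i \<le> k i) \<and> (\<forall>j\<in>S. s j = vl W R {i\<in>S. Phi q i \<le> s i} j)"
    if q: "q \<in> Q0" for q s
    unfolding is_solution_def S_def[symmetric] using soleq[OF q] by auto
  have PhiS: "Phi q i \<le> k i" "1 \<le> Phi q i" if "q \<in> Q0" "i \<in> S" for q i
    using tm_range[OF kpk[of i], of "q i"] that unfolding Phi_def Q0_def by auto
  have equiv: "smallest_solution d r (cyc_fam x q k) k k \<longleftrightarrow> good W R S (Phi q)" if q: "q \<in> Q0" for q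
  proof
    assume smq: "smallest_solution d r (cyc_fam x q k) k k"
    show "good W R S (Phi q)" unfolding good_def
    proof (intro allI impI notI)
      fix A assume A: "A \<subset> S" "cons W R S (Phi q) A"
      define s where "s j = vl W R A j" for j
      have sk: "\<forall>i\<in>S. s i \<le> k i" using vl_mono[OF finS] A(1) kvl unfolding s_def by auto
      have As: "{i\<in>S. Phi q i \<le> s i} = A" using A unfolding cons_def s_def by auto
      have "is_solution d r (cyc_fam x q k) k s" using solq[OF q] sk As unfolding s_def by auto
      then have ks: "\<forall>i\<in>S. k i \<le> s i" using smq unfolding smallest_solution_def S_def by auto
      obtain j where j: "j \<in> S" "j \<notin> A" using A(1) by auto
      have "k j \<le> s j" using ks j(1) by blast
      then have "Phi q j \<le> s j" using PhiS(1)[OF q j(1)] by linarith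
      then have "j \<in> A" using As j by auto
      then show False using j by auto
    qed
  next
    assume g: "good W R S (Phi q)"
    have solk: "is_solution d r (cyc_fam x q k) k k"
    proof -
      have "{i\<in>S. Phi q i \<le> k i} = S" using PhiS[OF q] by auto
      then show ?thesis using solq[OF q] kvl by auto
    qed
    moreover have "\<forall>i\<in>{1..d}. k i \<le> s' i" if s': "is_solution d r (cyc_fam x q k) k s'" for s'
    proof -
      let ?A = "{i\<in>S. Phi q i \<le> s' i}"
      have sv: "\<forall>j\<in>S. s' j = vl W R ?A j" using solq[OF q] s' by auto
      have "cons W R S (Phi q) ?A" unfolding cons_def using sv by auto
      then have "\<not> ?A \<subset> S" using g unfolding good_def by auto
      then have "?A = S" by auto
      then show ?thesis using sv kvl unfolding S_def by auto
    qed
    ultimately show "smallest_solution d r (cyc_fam x q k) k k" unfolding smallest_solution_def by auto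
  qed
  have bij: "bij_betw Phi {q \<in> Q0. smallest_solution d r (cyc_fam x q k) k k} (TS W R S)"
  proof (rule bij_betw_byWitness[where f'=Psi])
    show "\<forall>q\<in>{q \<in> Q0. smallest_solution d r (cyc_fam x q k) k k}. Psi (Phi q) = q"
    proof (intro ballI ext)
      fix q i assume q: "q \<in> {q \<in> Q0. smallest_solution d r (cyc_fam x q k) k k}"
      then have "q \<in> Q0" by auto
      then show "Psi (Phi q) i = q i"
        using tmi_tm[OF kpk[of i], of "q i"] PiE_arb[of q S "\<lambda>i. {..<k i}" i]
        unfolding Psi_def Phi_def Q0_def by auto
    qed
    show "\<forall>t\<in>TS W R S. Phi (Psi t) = t"
    proof (intro ballI ext)
      fix t i assume t: "t \<in> TS W R S"
      then have t': "t \<in> (\<Pi>\<^sub>E j\<in>S. {1..vl W R S j})" unfolding TS_def by auto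
      show "Phi (Psi t) i = t i"
      proof (cases "i \<in> S")
        case True
        then have "t i \<in> {1..k i}" using t' kvl by auto
        then show ?thesis using tm_tmi[OF kpk[OF True]] True unfolding Psi_def Phi_def by auto
      next
        case False then show ?thesis using PiE_arb[OF t' False] unfolding Psi_def Phi_def by auto
      qed
    qed
    show "Phi ` {q \<in> Q0. smallest_solution d r (cyc_fam x q k) k k} \<subseteq> TS W R S"
    proof
      fix t assume "t \<in> Phi ` {q \<in> Q0. smallest_solution d r (cyc_fam x q k) k k}"
      then obtain q where q: "q \<in> Q0" "smallest_solution d r (cyc_fam x q k) k k" and t: "t = Phi q" by auto
      have "t \<in> (\<Pi>\<^sub>E j\<in>S. {1..vl W R S j})"
        using PhiS[OF q(1)] kvl unfolding t by (auto simp: Phi_def PiE_iff)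
      moreover have "good W R S t" using equiv[OF q(1)] q(2) t by auto
      ultimately show "t \<in> TS W R S" unfolding TS_def by auto
    qed
    show "Psi ` TS W R S \<subseteq> {q \<in> Q0. smallest_solution d r (cyc_fam x q k) k k}"
    proof
      fix q assume "q \<in> Psi ` TS W R S"
      then obtain t where t: "t \<in> TS W R S" and q: "q = Psi t" by auto
      then have t': "t \<in> (\<Pi>\<^sub>E j\<in>S. {1..vl W R S j})" "good W R S t" unfolding TS_def by auto
      have qQ: "q \<in> Q0"
      proof -
        have "q i < k i" if "i \<in> S" for i
        proof -
          have "t i \<in> {1..k i}" using t'(1) kvl[OF that] that by (auto simp: PiE_iff)
          then show ?thesis using tmi_range[OF kpk[OF that], of "t i"] that unfolding q Psi_def by auto
        qed
        then show ?thesis unfolding Q0_def q Psi_def by (auto simp: PiE_iff)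
      qed
      have "Phi q = t"
      proof
        fix i show "Phi q i = t i"
        proof (cases "i \<in> S")
          case True
          then have "t i \<in> {1..k i}" using t' kvl by auto
          then show ?thesis using tm_tmi[OF kpk[OF True]] True unfolding q Psi_def Phi_def by auto
        next
          case False then show ?thesis using PiE_arb[OF t'(1) False] unfolding q Psi_def Phi_def by auto
        qed
      qed
      then show "q \<in> {q \<in> Q0. smallest_solution d r (cyc_fam x q k) k k}"
        using equiv[OF qQ] t'(2) qQ by auto
    qed
  qed
  have "card {q \<in> (\<Pi>\<^sub>E i\<in>{1..d}. {..<k i}). smallest_solution d r (cyc_fam x q k) k k} = card (TS W R S)"
    using bij_betw_same_card[OF bij] unfolding Q0_def S_def by simp
  also have "\<dots> = FS W R S" by (rule TS_FS[OF finS z])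
  finally have "int (card {q \<in> (\<Pi>\<^sub>E i\<in>{1..d}. {..<k i}). smallest_solution d r (cyc_fam x q k) k k})
      = (\<Sum>jv\<in>forests S. \<Prod>j\<in>S. int (wt W R jv j))"
    unfolding FS_def by (simp add: of_nat_sum of_nat_prod)
  also have "\<dots> = (\<Sum>jv\<in>forests S. \<Prod>i\<in>S. (if jv i = 0 then r i else x (jv i) i (k (jv i))))"
  proof (intro sum.cong prod.cong refl)
    fix jv i assume jv: "jv \<in> forests S" and i: "i \<in> S"
    have "jv i \<in> insert 0 S" "jv i \<noteq> i" using jv i unfolding forests_def by auto
    then show "int (wt W R jv i) = (if jv i = 0 then r i else x (jv i) i (k (jv i)))"
      unfolding wt_def using Rint[OF i] Wint[of "jv i" i] i by auto
  qed
  finally show ?thesis unfolding elem_forests_eq S_def .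
qed

end
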